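(* Let $\kappa$ be an infinite cardinal, let $(A,B,C)\in S\setminus B_0$ where $B_0=\{(X,\,X\cap Z,\,Z): X,Z\in\mathcal{F}(\kappa),\ X\sim Z\}$, and let $(A',B',C')$ be a complement of $(A,B,C)$ in $S$. If $B\subseteq A$, then $B'\not\subseteq A'$.
   Context: $\mathcal{F}(\kappa)$ is the Boolean lattice of subsets $X\subseteq\kappa$ that are finite or cofinite. For $X,Z\in\mathcal{F}(\kappa)$, $X\sim Z$ means that either both $X,Z$ are finite or both $\kappa\setminus X,\kappa\setminus Z$ are finite. Let $\mu(A,B,C)=(A\cap B)\cup(A\cap C)\cup(B\cap C)$; a triple is balanced if $A\cap B=A\cap C=B\cap C$. $S$ is the set of balanced triples $(A,B,C)\in\mathcal{F}(\kappa)^3$ with $C\setminus\mu(A,B,C)$ finite, ordered componentwise; it is a bounded lattice with componentwise meet, join $(A,B,C)\vee(A',B',C')=(U_1\cup m,U_2\cup m,U_3\cup m)$ where $U_1=A\cup A'$, $U_2=B\cup B'$, $U_3=C\cup C'$, $m=\mu(U_1,U_2,U_3)$, and bounds $(\emptyset,\emptyset,\emptyset)$, $(\kappa,\kappa,\kappa)$. A complement of $x$ in $S$ is $y\in S$ with $x\wedge y$ the least and $x\vee y$ the greatest element. (In the paper the set $B_0$ is called $B$.) *)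

theory Defs
  imports Main
begin

text \<open>The infinite cardinal kappa is modelled as the universe of an infinite type 'a.\<close>

definition FinCof :: "'a set set" where
  "FinCof = {X. finite X \<or> finite (- X)}"

definition simF :: "'a set \<Rightarrow> 'a set \<Rightarrow> bool" where
  "simF X Z \<longleftrightarrow> (finite X \<and> finite Z) \<or> (finite (- X) \<and> finite (- Z))"

definition mu :: "'a set \<Rightarrow> 'a set \<Rightarrow> 'a set \<Rightarrow> 'a set" where
  "mu A B C = (A \<inter> B) \<union> (A \<inter> C) \<union> (B \<inter> C)"

definition balanced :: "'a set \<Rightarrow> 'a set \<Rightarrow> 'a set \<Rightarrow> bool" where
  "balanced A B C \<longleftrightarrow> A \<inter> B = A \<inter> C \<and> A \<inter> C = B \<inter> C"

definition S :: "('a set \<times> 'a set \<times> 'a set) set" where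
  "S = {(A, B, C). A \<in> FinCof \<and> B \<in> FinCof \<and> C \<in> FinCof \<and> balanced A B C
                  \<and> finite (C - mu A B C)}"

definition meetS :: "'a set \<times> 'a set \<times> 'a set \<Rightarrow> 'a set \<times> 'a set \<times> 'a set \<Rightarrow> 'a set \<times> 'a set \<times> 'a set" where
  "meetS x y = (case x of (A, B, C) \<Rightarrow> case y of (A', B', C') \<Rightarrow> (A \<inter> A', B \<inter> B', C \<inter> C'))"

definition joinS :: "'a set \<times> 'a set \<times> 'a set \<Rightarrow> 'a set \<times> 'a set \<times> 'a set \<Rightarrow> 'a set \<times> 'a set \<times> 'a set" where
  "joinS x y = (case x of (A, B, C) \<Rightarrow> case y of (A', B', C') \<Rightarrow>
     (let U1 = A \<union> A'; U2 = B \<union> B'; U3 = C \<union> C'; m = mu U1 U2 U3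
      in (U1 \<union> m, U2 \<union> m, U3 \<union> m)))"

definition botS :: "'a set \<times> 'a set \<times> 'a set" where
  "botS = ({}, {}, {})"

definition topS :: "'a set \<times> 'a set \<times> 'a set" where
  "topS = (UNIV, UNIV, UNIV)"

definition is_complementS :: "'a set \<times> 'a set \<times> 'a set \<Rightarrow> 'a set \<times> 'a set \<times> 'a set \<Rightarrow> bool" where
  "is_complementS x y \<longleftrightarrow> y \<in> S \<and> meetS x y = botS \<and> joinS x y = topS"

definition B0 :: "('a set \<times> 'a set \<times> 'a set) set" where
  "B0 = {(X, X \<inter> Z, Z) | X Z. X \<in> FinCof \<and> Z \<in> FinCof \<and> simF X Z}"

end

theory Submission
  imports Defs
begin

theorem lemma5p4:
  fixes A B C A' B' C' :: "'a set"
  assumes "infinite (UNIV :: 'a set)"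
    and "(A, B, C) \<in> S"
    and "(A, B, C) \<notin> B0"
    and "is_complementS (A, B, C) (A', B', C')"
    and "B \<subseteq> A"
  shows "\<not> B' \<subseteq> A'"
proof
  assume hB': "B' \<subseteq> A'"
  have bal: "balanced A B C" and fA: "A \<in> FinCof" and fC: "C \<in> FinCof" and fCM: "finite (C - mu A B C)"
    using assms(2) by (auto simp: S_def)
  have hB: "B = A \<inter> C" using bal assms(5) unfolding balanced_def by blast
  have muABC: "mu A B C = A \<inter> C" using hB unfolding mu_def by blast
  have fCA: "finite (C - A)" proof - have "C - A = C - mu A B C" using muABC by blast then show ?thesis using fCM by simp qed
  have nsim: "\<not> simF A C"
    using assms(3) fA fC hB unfolding B0_def by blast
  have Acof: "finite (- A) \<and> finite C"
  proof -
    have "\<not> (finite A \<and> finite (- C))"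
    proof
      assume h: "finite A \<and> finite (- C)"
      have "UNIV = (C - A) \<union> A \<union> - C" by blast
      then have "finite (UNIV :: 'a set)" using h fCA by (metis finite_Un)
      then show False using assms(1) by simp
    qed
    then show ?thesis using fA fC nsim unfolding FinCof_def simF_def by blast
  qed
  have cplS: "(A', B', C') \<in> S" and meet: "meetS (A,B,C) (A',B',C') = botS"
    and join: "joinS (A,B,C) (A',B',C') = topS"
    using assms(4) unfolding is_complementS_def by auto
  have bal': "balanced A' B' C'" and fCM': "finite (C' - mu A' B' C')"
    using cplS by (auto simp: S_def)
  have hB2: "B' = A' \<inter> C'" using bal' hB' unfolding balanced_def by blast
  have mu': "mu A' B' C' = A' \<inter> C'" using hB2 unfolding mu_def by blast
  have fCA': "finite (C' - A')" proof - have "C' - A' = C' - mu A' B' C'" using mu' by blast then show ?thesis using fCM' by simp qed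
  have AA: "A \<inter> A' = {}" using meet unfolding meetS_def botS_def by simp
  have finA': "finite A'" using AA Acof by (metis Int_commute disjoint_eq_subset_Compl finite_subset)
  have j3: "C \<union> C' \<union> mu (A \<union> A') (B \<union> B') (C \<union> C') = UNIV"
    using join unfolding joinS_def topS_def Let_def by simp
  have "mu (A \<union> A') (B \<union> B') (C \<union> C') \<subseteq> C \<union> C'"
    using hB hB2 unfolding mu_def by blast
  then have CC: "C \<union> C' = UNIV" using j3 by blast
  have "- (C \<union> A') \<subseteq> C' - A'" using CC by blast
  then have "finite (- (C \<union> A'))" using fCA' finite_subset by blast
  moreover have "finite (C \<union> A')" using Acof finA' by simp
  ultimately have "finite (UNIV :: 'a set)"
    by (metis Compl_partition finite_Un)
  then show False using assms(1) by simp
qed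

end
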